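(* Let $F=(A,R)$ be an abstract argumentation framework and $S,S'$ initial sets of $F$ with $S\neq S'$. (1) If $S'$ is an unattacked initial set of $F$, then $S'$ is an unattacked initial set of $F^S$. (2) If $S'\to S$, then $S'$ is not an initial set of $F^S$. (3) If not $S'\to S$, then $S'\cap\bigcup\mathrm{IS}(F^S)\neq\emptyset$.
   Context: An abstract argumentation framework is a pair $F=(A,R)$ with $A$ finite and $R\subseteq A\times A$ ($a\to b$ means $(a,b)\in R$). $S^+=\{a\mid\exists b\in S:b\to a\}$, $S^-=\{a\mid\exists b\in S: a\to b\}$, and $S\to S'$ means $S^+\cap S'\neq\emptyset$. $S$ is admissible if conflict-free and every attacker of an element of $S$ is attacked by some element of $S$. An initial set is a non-empty admissible set with no non-empty admissible proper subset; $\mathrm{IS}(F)$ denotes the set of initial sets of $F$. An initial set $S$ is unattacked if $S^-=\emptyset$. The reduct is $F^S=(A',R\cap(A'\times A'))$ with $A'=A\setminus(S\cup S^+)$. *)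

theory Defs
  imports Main
begin

definition AF :: "'a set \<Rightarrow> ('a \<times> 'a) set \<Rightarrow> bool" where
  "AF A R \<longleftrightarrow> finite A \<and> R \<subseteq> A \<times> A"

definition att_plus :: "('a \<times> 'a) set \<Rightarrow> 'a set \<Rightarrow> 'a set" where
  "att_plus R S = {a. \<exists>b\<in>S. (b, a) \<in> R}"

definition att_minus :: "('a \<times> 'a) set \<Rightarrow> 'a set \<Rightarrow> 'a set" where
  "att_minus R S = {a. \<exists>b\<in>S. (a, b) \<in> R}"

definition set_attacks :: "('a \<times> 'a) set \<Rightarrow> 'a set \<Rightarrow> 'a set \<Rightarrow> bool" where
  "set_attacks R S S' \<longleftrightarrow> att_plus R S \<inter> S' \<noteq> {}"

definition conflict_free :: "('a \<times> 'a) set \<Rightarrow> 'a set \<Rightarrow> bool" where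
  "conflict_free R S \<longleftrightarrow> (\<forall>a\<in>S. \<forall>b\<in>S. (a, b) \<notin> R)"

definition admissible :: "'a set \<Rightarrow> ('a \<times> 'a) set \<Rightarrow> 'a set \<Rightarrow> bool" where
  "admissible A R S \<longleftrightarrow> S \<subseteq> A \<and> conflict_free R S \<and>
     (\<forall>a\<in>S. \<forall>b. (b, a) \<in> R \<longrightarrow> (\<exists>c\<in>S. (c, b) \<in> R))"

definition initial :: "'a set \<Rightarrow> ('a \<times> 'a) set \<Rightarrow> 'a set \<Rightarrow> bool" where
  "initial A R S \<longleftrightarrow> S \<noteq> {} \<and> admissible A R S \<and>
     \<not> (\<exists>T. T \<noteq> {} \<and> T \<subset> S \<and> admissible A R T)"

definition IS :: "'a set \<Rightarrow> ('a \<times> 'a) set \<Rightarrow> 'a set set" where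
  "IS A R = {S. initial A R S}"

definition unattacked_initial :: "'a set \<Rightarrow> ('a \<times> 'a) set \<Rightarrow> 'a set \<Rightarrow> bool" where
  "unattacked_initial A R S \<longleftrightarrow> initial A R S \<and> att_minus R S = {}"

definition reduct_args :: "'a set \<Rightarrow> ('a \<times> 'a) set \<Rightarrow> 'a set \<Rightarrow> 'a set" where
  "reduct_args A R S = A - (S \<union> att_plus R S)"

definition reduct_att :: "'a set \<Rightarrow> ('a \<times> 'a) set \<Rightarrow> 'a set \<Rightarrow> ('a \<times> 'a) set" where
  "reduct_att A R S = R \<inter> (reduct_args A R S \<times> reduct_args A R S)"

end

theory Submission
  imports Defs
begin

lemma exists_initial_sub:
  assumes "finite T" "T \<noteq> {}" "admissible A R T"
  shows "\<exists>U. U \<subseteq> T \<and> initial A R U"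
  using assms
proof (induction T rule: finite_psubset_induct)
  case (psubset T)
  show ?case
  proof (cases "initial A R T")
    case True then show ?thesis by blast
  next
    case False
    then obtain V where V: "V \<noteq> {}" "V \<subset> T" "admissible A R V"
      using psubset.prems unfolding initial_def by blast
    from psubset.IH[OF V(2) V(1) V(3)] V(2) show ?thesis by blast
  qed
qed

theorem proposition4:
  fixes A :: "'a set" and R :: "('a \<times> 'a) set" and S S' :: "'a set"
  assumes "AF A R"
    and "initial A R S" and "initial A R S'" and "S \<noteq> S'"
  shows "(unattacked_initial A R S' \<longrightarrow>
            unattacked_initial (reduct_args A R S) (reduct_att A R S) S')
       \<and> (set_attacks R S' S \<longrightarrow> \<not> initial (reduct_args A R S) (reduct_att A R S) S')
       \<and> (\<not> set_attacks R S' S \<longrightarrow>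
            S' \<inter> \<Union> (IS (reduct_args A R S) (reduct_att A R S)) \<noteq> {})"
proof (intro conjI impI)
  have finA: "finite A" using assms(1) by (simp add: AF_def)
  have iS: "S \<noteq> {}" "admissible A R S" "\<And>T. T \<noteq> {} \<Longrightarrow> T \<subset> S \<Longrightarrow> \<not> admissible A R T"
    using assms(2) unfolding initial_def by blast+
  have iS': "S' \<noteq> {}" "admissible A R S'" "\<And>T. T \<noteq> {} \<Longrightarrow> T \<subset> S' \<Longrightarrow> \<not> admissible A R T"
    using assms(3) unfolding initial_def by blast+
  {
    assume u: "unattacked_initial A R S'"
    have noatt: "\<And>a b. a \<in> S' \<Longrightarrow> (b, a) \<notin> R"
      using u unfolding unattacked_initial_def att_minus_def by blast
    have cf: "conflict_free R S'" "S' \<subseteq> A" using iS'(2) unfolding admissible_def by auto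
    have subadm: "\<And>T. T \<subseteq> S' \<Longrightarrow> admissible A R T"
      using noatt cf unfolding admissible_def conflict_free_def by blast
    have disj: "S' \<inter> S = {}"
    proof (rule ccontr)
      assume ne: "S' \<inter> S \<noteq> {}"
      have "\<not> (S' \<inter> S \<subset> S')" using iS'(3)[OF ne] subadm by blast
      hence "S' \<subseteq> S" by blast
      hence "S' \<subset> S" using assms(4) by blast
      thus False using iS(3)[OF iS'(1)] iS'(2) by blast
    qed
    have inred: "S' \<subseteq> reduct_args A R S"
      using disj noatt cf(2) unfolding reduct_args_def att_plus_def by blast
    have "admissible (reduct_args A R S) (reduct_att A R S) S'"
      using inred cf noatt unfolding admissible_def conflict_free_def reduct_att_def by blast
    moreover have "\<not> (\<exists>T. T \<noteq> {} \<and> T \<subset> S' \<and> admissible (reduct_args A R S) (reduct_att A R S) T)"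
    proof
      assume "\<exists>T. T \<noteq> {} \<and> T \<subset> S' \<and> admissible (reduct_args A R S) (reduct_att A R S) T"
      then obtain T where "T \<noteq> {}" "T \<subset> S'" by blast
      thus False using iS'(3) subadm by blast
    qed
    moreover have "att_minus (reduct_att A R S) S' = {}"
      using noatt unfolding att_minus_def reduct_att_def by blast
    ultimately show "unattacked_initial (reduct_args A R S) (reduct_att A R S) S'"
      using iS'(1) unfolding unattacked_initial_def initial_def by blast
  }
  {
    assume sa: "set_attacks R S' S"
    show "\<not> initial (reduct_args A R S) (reduct_att A R S) S'"
    proof
      assume "initial (reduct_args A R S) (reduct_att A R S) S'"
      hence sub: "S' \<subseteq> reduct_args A R S" unfolding initial_def admissible_def by blast
      obtain c a where ca: "c \<in> S'" "a \<in> S" "(c, a) \<in> R"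
        using sa unfolding set_attacks_def att_plus_def by blast
      then obtain d where "d \<in> S" "(d, c) \<in> R" using iS(2) unfolding admissible_def by blast
      thus False using sub ca(1) unfolding reduct_args_def att_plus_def by blast
    qed
  }
  {
    assume nsa: "\<not> set_attacks R S' S"
    have nsa2: "\<And>c a. c \<in> S' \<Longrightarrow> a \<in> S \<Longrightarrow> (c, a) \<notin> R"
      using nsa unfolding set_attacks_def att_plus_def by blast
    have nsb: "\<And>c a. c \<in> S \<Longrightarrow> a \<in> S' \<Longrightarrow> (c, a) \<notin> R"
    proof
      fix c a assume "c \<in> S" "a \<in> S'" "(c, a) \<in> R"
      then obtain d where "d \<in> S'" "(d, c) \<in> R" using iS'(2) unfolding admissible_def by blast
      thus False using nsa2 \<open>c \<in> S\<close> by blast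
    qed
    define T where "T = S' - S"
    have "T \<noteq> {}"
    proof
      assume "T = {}"
      hence "S' \<subset> S" using assms(4) unfolding T_def by blast
      thus False using iS(3)[OF iS'(1)] iS'(2) by blast
    qed
    have S'A: "S' \<subseteq> A" using iS'(2) unfolding admissible_def by blast
    have Tred: "T \<subseteq> reduct_args A R S"
      using S'A nsb unfolding T_def reduct_args_def att_plus_def by blast
    have "admissible (reduct_args A R S) (reduct_att A R S) T"
      unfolding admissible_def
    proof (intro conjI ballI allI impI)
      show "T \<subseteq> reduct_args A R S" by (rule Tred)
      show "conflict_free (reduct_att A R S) T"
        using iS'(2) unfolding admissible_def conflict_free_def reduct_att_def T_def by blast
    next
      fix a b assume a: "a \<in> T" and b: "(b, a) \<in> reduct_att A R S"
      hence bR: "(b, a) \<in> R" and bred: "b \<in> reduct_args A R S" unfolding reduct_att_def by auto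
      obtain c where c: "c \<in> S'" "(c, b) \<in> R" using iS'(2) a bR unfolding admissible_def T_def by blast
      have "c \<notin> S" using c(2) bred unfolding reduct_args_def att_plus_def by blast
      hence "c \<in> T" using c(1) unfolding T_def by blast
      thus "\<exists>c\<in>T. (c, b) \<in> reduct_att A R S"
        using c(2) bred Tred unfolding reduct_att_def by blast
    qed
    moreover have "finite T" using finite_subset[OF S'A finA] unfolding T_def by simp
    ultimately obtain U where "U \<subseteq> T" "initial (reduct_args A R S) (reduct_att A R S) U"
      using exists_initial_sub[OF _ \<open>T \<noteq> {}\<close>] by blast
    moreover have "U \<noteq> {}" using calculation(2) unfolding initial_def by blast
    ultimately show "S' \<inter> \<Union> (IS (reduct_args A R S) (reduct_att A R S)) \<noteq> {}"
      unfolding IS_def T_def by blast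
  }
qed

end
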